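(* Let $m\ge 4$, $t$, $g$ be positive integers with $t\ge g+1$, and put $\alpha=(t-1)-g$. Consider a bin configuration of the game $G(m,t,g)$ in which every current bin load is at most $t-1$. Suppose there is a bin $B$ such that the sum of the loads of the other $m-1$ bins is at least $(m-1)g-\alpha$. Then Algorithm wins from this configuration.
   Context: Bin stretching game $G(m,t,g)$: there are $m$ bins. In each round Adversary presents an item of positive integer size, and Algorithm then irrevocably places it into one of the $m$ bins. The load of a bin is the total size of the items in it. A bin configuration consists of: - the current loads $L_1,\dots,L_m$ of the bins, and - the multiset $\mathcal I$ of items presented so far, placed so that the bins have exactly these loads. "Algorithm wins from this configuration" means the following. There is an online rule which, given the configuration and the items presented so far, assigns each newly presented item to a bin. This rule must guarantee: for every finite sequence $e_1,\dots,e_j$ of further positive-integer items such that the multiset $\mathcal I\cup\{e_1,\dots,e_j\}$ can be partitioned into $m$ parts each of total size at most $g$, every bin load is at most $t-1$ after these items are placed. *)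

theory Defs
  imports Main "HOL-Library.Multiset"
begin

text \<open>Bins are indexed by 0..<m. A bin configuration is given by the contents
  C i (a multiset of item sizes) of every bin i < m; its load is the sum of C i,
  and the multiset of items presented so far is the sum over all bins.\<close>

definition bin_load :: "(nat \<Rightarrow> nat multiset) \<Rightarrow> nat \<Rightarrow> nat" where
  "bin_load C i = sum_mset (C i)"

definition items_of :: "nat \<Rightarrow> (nat \<Rightarrow> nat multiset) \<Rightarrow> nat multiset" where
  "items_of m C = (\<Sum>i<m. C i)"

definition packable :: "nat \<Rightarrow> nat \<Rightarrow> nat multiset \<Rightarrow> bool" where
  "packable m g M \<longleftrightarrow> (\<exists>P :: nat \<Rightarrow> nat multiset.
      (\<Sum>i<m. P i) = M \<and> (\<forall>i<m. sum_mset (P i) \<le> g))"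

text \<open>An online rule: given the list of items presented after the configuration
  (the current item last), it returns the bin receiving the current item.\<close>
definition load_after ::
  "(nat \<Rightarrow> nat multiset) \<Rightarrow> (nat list \<Rightarrow> nat) \<Rightarrow> nat list \<Rightarrow> nat \<Rightarrow> nat" where
  "load_after C A es i =
     bin_load C i + (\<Sum>k<length es. if A (take (Suc k) es) = i then es ! k else 0)"

definition alg_wins :: "nat \<Rightarrow> nat \<Rightarrow> nat \<Rightarrow> (nat \<Rightarrow> nat multiset) \<Rightarrow> bool" where
  "alg_wins m t g C \<longleftrightarrow> (\<exists>A :: nat list \<Rightarrow> nat.
      (\<forall>xs. A xs < m) \<and>
      (\<forall>es. (\<forall>e\<in>set es. 0 < e) \<longrightarrow> packable m g (items_of m C + mset es) \<longrightarrow>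
            (\<forall>i<m. load_after C A es i \<le> t - 1)))"

end

theory Submission
  imports Defs
begin

lemma sum_mset_lessThan: "sum_mset (\<Sum>i<(n::nat). P i) = (\<Sum>i<n. sum_mset (P i))"
  by (induction n) auto

lemma load_after_const:
  "load_after C (\<lambda>_. B) es i = bin_load C i + (if i = B then sum_list es else 0)"
  unfolding load_after_def by (simp add: sum_list_sum_nth atLeast0LessThan)

theorem mainTheorem1:
  fixes m t g :: nat and C :: "nat \<Rightarrow> nat multiset"
  assumes "m \<ge> 4" and "0 < t" and "0 < g" and "t \<ge> g + 1"
    and "\<forall>i<m. \<forall>x\<in>#C i. 0 < x"
    and "\<forall>i<m. bin_load C i \<le> t - 1"
    and "\<exists>B<m. int (\<Sum>i\<in>{..<m} - {B}. bin_load C i)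
                 \<ge> int (m - 1) * int g - (int t - 1 - int g)"
  shows "alg_wins m t g C"
proof -
  obtain B where B: "B < m" and hB: "int (\<Sum>i\<in>{..<m} - {B}. bin_load C i)
                 \<ge> int (m - 1) * int g - (int t - 1 - int g)" using assms(7) by blast
  show ?thesis unfolding alg_wins_def
  proof (intro exI[of _ "\<lambda>_. B"] conjI allI impI)
    show "\<And>xs. B < m" using B .
    fix es :: "nat list" and i
    assume pk: "packable m g (items_of m C + mset es)" and i: "i < m"
    obtain P where P: "(\<Sum>i<m. P i) = items_of m C + mset es" "\<forall>i<m. sum_mset (P i) \<le> g"
      using pk unfolding packable_def by blast
    have "sum_mset (items_of m C + mset es) = (\<Sum>i<m. sum_mset (P i))"
      using P(1) sum_mset_lessThan by metis
    also have "\<dots> \<le> (\<Sum>i<m. g)" using P(2) by (intro sum_mono) auto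
    finally have tot: "(\<Sum>i<m. bin_load C i) + sum_list es \<le> m * g"
      by (simp add: items_of_def sum_mset_lessThan bin_load_def sum_mset_sum_list)
    have split: "(\<Sum>i<m. bin_load C i) = bin_load C B + (\<Sum>i\<in>{..<m} - {B}. bin_load C i)"
      using B by (simp add: sum.remove)
    have m1: "int (m - 1) = int m - 1" using assms(1) by simp
    have "bin_load C B + sum_list es \<le> t - 1"
    proof -
      have "int (bin_load C B) + int (sum_list es) + int (\<Sum>i\<in>{..<m} - {B}. bin_load C i) \<le> int m * int g"
        using tot split by (metis of_nat_add of_nat_le_iff of_nat_mult add.commute add.left_commute)
      hence "int (bin_load C B) + int (sum_list es) \<le> int t - 1"
        using hB m1 by (simp add: algebra_simps)
      thus ?thesis using assms(2) by linarith
    qed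
    thus "load_after C (\<lambda>_. B) es i \<le> t - 1"
      using assms(6) i by (simp add: load_after_const)
  qed
qed

end
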